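(* Let $\Phi,\Psi:G\to[0,\infty)$ be continuous and let $\Lambda$ be relatively separated in $G$. Then \[\sum_{\lambda\in\Lambda}\Phi(\lambda^{-1}x)\Psi(y^{-1}\lambda)\le\frac{\mathrm{rel}(\Lambda)}{\mu_G(Q)}\,(M_Q\Psi*M_Q^R\Phi)(y^{-1}x)\quad\text{for all }x,y\in G,\] and \[\sum_{\lambda\in\Lambda}\Psi(y^{-1}\lambda)\le\frac{\mathrm{rel}(\Lambda)}{\mu_G(Q)}\|\Psi\|_{\mathcal{W}^L}\quad\text{for all }y\in G.\] Moreover, if $\Theta\in L^1(G)$ is continuous and $\Theta^\vee\in\mathcal{W}^L(G)$, then $D_{\Theta,\Lambda}:\ell^2(\Lambda)\to L^2(G)$, $(c_\lambda)_\lambda\mapsto\sum_{\lambda}c_\lambda L_\lambda\Theta$, is well defined and bounded with $\|D_{\Theta,\Lambda}\|_{\ell^2\to L^2}^2\le\frac{\mathrm{rel}(\Lambda)}{\mu_G(Q)}\|\Theta\|_{L^1}\|\Theta^\vee\|_{\mathcal{W}^L}$, and the defining series converges absolutely $\mu_G$-a.e. on $G$.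
   Context: $G$ is a $\sigma$-compact locally compact group with left Haar measure $\mu_G$; $Q$ a fixed symmetric open relatively compact neighborhood of $e$. $M_Qf(x)=\operatorname{ess\,sup}_{y\in xQ}|f(y)|$, $M_Q^Rf(x)=\operatorname{ess\,sup}_{y\in Qx}|f(y)|$; $*$ is convolution $(f*g)(x)=\int_Gf(y)g(y^{-1}x)\,d\mu_G(y)$. $\mathcal{W}^L(G)=\{f\in L^\infty_{\mathrm{loc}}(G):M_Qf\in L^1(G)\}$ with $\|f\|_{\mathcal{W}^L}=\|M_Qf\|_{L^1}$. $L_yf=f(y^{-1}\cdot)$, $f^\vee(x)=f(x^{-1})$. $\mathrm{rel}(\Lambda)=\sup_{x\in G}\#(\Lambda\cap xQ)$ (with multiplicity); $\Lambda$ is relatively separated if this is finite. *)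

theory Defs
  imports "HOL-Analysis.Analysis"
begin

text \<open>The group G is a type 'a with (not necessarily commutative) group operation
  written additively: x + y is the product xy, 0 is e, -x is x^{-1}.
  Thus x^{-1}y is -x + y, xQ is ((+) x) ` Q and Qx is (\<lambda>q. q + x) ` Q.\<close>

definition sigma_compact_lc_group :: "'a::{topological_group_add,t2_space} itself \<Rightarrow> bool" where
  "sigma_compact_lc_group _ \<longleftrightarrow>
     locally_compact_space (euclidean :: 'a topology) \<and>
     (\<exists>K :: nat \<Rightarrow> 'a set. (\<forall>n. compact (K n)) \<and> (\<Union>n. K n) = UNIV)"

definition left_haar_measure :: "'a::{topological_group_add,t2_space} measure \<Rightarrow> bool" where
  "left_haar_measure M \<longleftrightarrow>
     sets M = sets borel \<and>
     (\<forall>A\<in>sets M. \<forall>g. emeasure M ((+) g ` A) = emeasure M A) \<and>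
     (\<forall>K. compact K \<longrightarrow> emeasure M K < \<infinity>) \<and>
     (\<forall>U. open U \<and> U \<noteq> {} \<longrightarrow> emeasure M U > 0) \<and>
     (\<forall>A\<in>sets M. emeasure M A = (INF U\<in>{U. open U \<and> A \<subseteq> U}. emeasure M U)) \<and>
     (\<forall>U. open U \<longrightarrow> emeasure M U = (SUP K\<in>{K. compact K \<and> K \<subseteq> U}. emeasure M K))"

definition ess_sup_on :: "'a measure \<Rightarrow> 'a set \<Rightarrow> ('a \<Rightarrow> ennreal) \<Rightarrow> ennreal" where
  "ess_sup_on M S f = Inf {c. AE y in M. y \<in> S \<longrightarrow> f y \<le> c}"

definition maxL :: "'a::group_add measure \<Rightarrow> 'a set \<Rightarrow> ('a \<Rightarrow> 'b::real_normed_vector) \<Rightarrow> 'a \<Rightarrow> ennreal" where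
  "maxL M Q f x = ess_sup_on M ((+) x ` Q) (\<lambda>y. ennreal (norm (f y)))"

definition maxR :: "'a::group_add measure \<Rightarrow> 'a set \<Rightarrow> ('a \<Rightarrow> 'b::real_normed_vector) \<Rightarrow> 'a \<Rightarrow> ennreal" where
  "maxR M Q f x = ess_sup_on M ((\<lambda>q. q + x) ` Q) (\<lambda>y. ennreal (norm (f y)))"

definition conv_nn :: "'a::group_add measure \<Rightarrow> ('a \<Rightarrow> ennreal) \<Rightarrow> ('a \<Rightarrow> ennreal) \<Rightarrow> 'a \<Rightarrow> ennreal" where
  "conv_nn M f g x = (\<integral>\<^sup>+ y. f y * g (- y + x) \<partial>M)"

definition wiener_norm :: "'a::group_add measure \<Rightarrow> 'a set \<Rightarrow> ('a \<Rightarrow> 'b::real_normed_vector) \<Rightarrow> ennreal" where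
  "wiener_norm M Q f = (\<integral>\<^sup>+ x. maxL M Q f x \<partial>M)"

definition in_wiener :: "'a::{group_add,topological_space} measure \<Rightarrow> 'a set \<Rightarrow> ('a \<Rightarrow> 'b::{real_normed_vector,second_countable_topology}) \<Rightarrow> bool" where
  "in_wiener M Q f \<longleftrightarrow> f \<in> borel_measurable M \<and>
     (\<forall>K. compact K \<longrightarrow> ess_sup_on M K (\<lambda>y. ennreal (norm (f y))) < \<infinity>) \<and>
     maxL M Q f \<in> borel_measurable M \<and> wiener_norm M Q f < \<infinity>"

definition ecard :: "'i set \<Rightarrow> ennreal" where
  "ecard S = (if finite S then of_nat (card S) else \<infinity>)"

text \<open>rel(\<Lambda>) for the family \<Lambda> = (lam i)_{i\<in>I}, counted with multiplicity.\<close>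
definition rel_const :: "'a::group_add set \<Rightarrow> 'i set \<Rightarrow> ('i \<Rightarrow> 'a) \<Rightarrow> ennreal" where
  "rel_const Q I lam = (SUP x. ecard {i\<in>I. lam i \<in> (+) x ` Q})"

end

theory Submission
  imports Defs
begin


lemma countable_bij_nat:
  assumes "countable I"
  obtains g and S :: "nat set" where "bij_betw g S I"
proof -
  have "bij_betw (to_nat_on I) I (to_nat_on I ` I)"
    using assms by (auto simp: bij_betw_def)
  then have "bij_betw (inv_into I (to_nat_on I)) (to_nat_on I ` I) I"
    by (rule bij_betw_inv_into)
  then show ?thesis using that by blast
qed

lemma has_sum_nat_ext:
  fixes f :: "'i \<Rightarrow> 'b::{comm_monoid_add,topological_space}"
  assumes "bij_betw g S I"
  shows "(f has_sum s) I \<longleftrightarrow> ((\<lambda>n. if n \<in> S then f (g n) else 0) has_sum s) UNIV"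
proof -
  have "(f has_sum s) I \<longleftrightarrow> ((\<lambda>n. f (g n)) has_sum s) S"
    by (rule has_sum_reindex_bij_betw[OF assms, symmetric])
  also have "\<dots> \<longleftrightarrow> ((\<lambda>n. if n \<in> S then f (g n) else 0) has_sum s) UNIV"
    by (rule has_sum_cong_neutral) auto
  finally show ?thesis .
qed

lemma infsum_ennreal_suminf:
  fixes f :: "'i \<Rightarrow> ennreal"
  assumes "bij_betw g S I"
  shows "infsum f I = (\<Sum>n. if n \<in> S then f (g n) else 0)"
proof -
  have "(f has_sum infsum f I) I" by (rule has_sum_infsum) (simp add: nonneg_summable_on_complete)
  then have "((\<lambda>n. if n \<in> S then f (g n) else 0) has_sum infsum f I) UNIV"
    using has_sum_nat_ext[OF assms] by blast
  then have "(\<lambda>n. if n \<in> S then f (g n) else 0) sums infsum f I" by (rule has_sum_imp_sums)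
  then show ?thesis by (simp add: sums_unique)
qed

lemma infsum_complex_sums:
  fixes f :: "'i \<Rightarrow> 'b::{real_normed_vector}"
  assumes "bij_betw g S I" "f summable_on I"
  shows "(\<lambda>n. if n \<in> S then f (g n) else 0) sums infsum f I"
proof -
  have "(f has_sum infsum f I) I" using assms(2) by (rule has_sum_infsum)
  then have "((\<lambda>n. if n \<in> S then f (g n) else 0) has_sum infsum f I) UNIV"
    using has_sum_nat_ext[OF assms(1)] by blast
  then show ?thesis by (rule has_sum_imp_sums)
qed

lemma nn_integral_infsum:
  fixes f :: "'i \<Rightarrow> 'a \<Rightarrow> ennreal"
  assumes "countable I" "\<And>i. i \<in> I \<Longrightarrow> f i \<in> borel_measurable M"
  shows "(\<integral>\<^sup>+ x. (\<Sum>\<^sub>\<infinity>i\<in>I. f i x) \<partial>M) = (\<Sum>\<^sub>\<infinity>i\<in>I. \<integral>\<^sup>+ x. f i x \<partial>M)"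
proof -
  obtain g and S :: "nat set" where g: "bij_betw g S I" using countable_bij_nat[OF assms(1)] by blast
  have m: "(\<lambda>x. if n \<in> S then f (g n) x else 0) \<in> borel_measurable M" for n
    using assms(2) g by (cases "n \<in> S") (auto simp: bij_betw_def)
  have "(\<integral>\<^sup>+ x. (\<Sum>\<^sub>\<infinity>i\<in>I. f i x) \<partial>M) = (\<integral>\<^sup>+ x. (\<Sum>n. if n \<in> S then f (g n) x else 0) \<partial>M)"
    by (subst infsum_ennreal_suminf[OF g]) simp
  also have "\<dots> = (\<Sum>n. \<integral>\<^sup>+ x. (if n \<in> S then f (g n) x else 0) \<partial>M)"
    by (rule nn_integral_suminf[OF m])
  also have "\<dots> = (\<Sum>n. if n \<in> S then \<integral>\<^sup>+ x. f (g n) x \<partial>M else 0)"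
    by (intro suminf_cong) auto
  also have "\<dots> = (\<Sum>\<^sub>\<infinity>i\<in>I. \<integral>\<^sup>+ x. f i x \<partial>M)"
    by (subst infsum_ennreal_suminf[OF g]) simp
  finally show ?thesis .
qed

lemma measurable_infsum_ennreal:
  fixes f :: "'i \<Rightarrow> 'a \<Rightarrow> ennreal"
  assumes "countable I" "\<And>i. i \<in> I \<Longrightarrow> f i \<in> borel_measurable M"
  shows "(\<lambda>x. \<Sum>\<^sub>\<infinity>i\<in>I. f i x) \<in> borel_measurable M"
proof -
  obtain g and S :: "nat set" where g: "bij_betw g S I" using countable_bij_nat[OF assms(1)] by blast
  have m: "(\<lambda>x. if n \<in> S then f (g n) x else 0) \<in> borel_measurable M" for n
    using assms(2) g by (cases "n \<in> S") (auto simp: bij_betw_def)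
  have "(\<lambda>x. \<Sum>n. if n \<in> S then f (g n) x else 0) \<in> borel_measurable M"
    using m by measurable
  then show ?thesis by (subst infsum_ennreal_suminf[OF g]) simp
qed

lemma measurable_infsum_banach:
  fixes f :: "'i \<Rightarrow> 'a \<Rightarrow> 'b::{banach,second_countable_topology}"
  assumes "countable I" "\<And>i. i \<in> I \<Longrightarrow> f i \<in> borel_measurable M"
    and "\<And>x. (\<lambda>i. f i x) summable_on I"
  shows "(\<lambda>x. \<Sum>\<^sub>\<infinity>i\<in>I. f i x) \<in> borel_measurable M"
proof -
  obtain g and S :: "nat set" where g: "bij_betw g S I" using countable_bij_nat[OF assms(1)] by blast
  have m: "(\<lambda>x. if n \<in> S then f (g n) x else 0) \<in> borel_measurable M" for n
    using assms(2) g by (cases "n \<in> S") (auto simp: bij_betw_def)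
  show ?thesis
  proof (rule borel_measurable_LIMSEQ_metric)
    show "(\<lambda>x. \<Sum>n<N. if n \<in> S then f (g n) x else 0) \<in> borel_measurable M" for N
      using m by measurable
    show "(\<lambda>N. \<Sum>n<N. if n \<in> S then f (g n) x else 0) \<longlonglongrightarrow> (\<Sum>\<^sub>\<infinity>i\<in>I. f i x)" for x
      using infsum_complex_sums[OF g assms(3)[of x]] by (simp add: sums_def)
  qed
qed



lemma left_transl_eq:
  fixes Q :: "'a::group_add set"
  shows "(+) a ` Q = (\<lambda>x. -a + x) -` Q"
proof (intro set_eqI iffI)
  fix x assume "x \<in> (+) a ` Q"
  then obtain q where "q \<in> Q" "x = a + q" by auto
  then show "x \<in> (\<lambda>x. -a + x) -` Q" by (simp add: add.assoc[symmetric])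
next
  fix x assume "x \<in> (\<lambda>x. -a + x) -` Q"
  then have "-a + x \<in> Q" by simp
  moreover have "x = a + (-a + x)" by (simp add: add.assoc[symmetric])
  ultimately show "x \<in> (+) a ` Q" by (metis image_eqI)
qed

lemma right_transl_eq:
  fixes Q :: "'a::group_add set"
  shows "(\<lambda>q. q + a) ` Q = (\<lambda>x. x + -a) -` Q"
proof (intro set_eqI iffI)
  fix x assume "x \<in> (\<lambda>q. q + a) ` Q"
  then obtain q where "q \<in> Q" "x = q + a" by auto
  then show "x \<in> (\<lambda>x. x + -a) -` Q" by (simp add: add.assoc)
next
  fix x assume "x \<in> (\<lambda>x. x + -a) -` Q"
  then have "x + -a \<in> Q" by simp
  moreover have "x = (x + -a) + a" by (simp add: add.assoc)
  ultimately show "x \<in> (\<lambda>q. q + a) ` Q" by (metis image_eqI)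
qed

lemma open_vimage_cont:
  assumes "open B" "continuous_on UNIV f"
  shows "open (f -` B)"
  using assms continuous_on_open_vimage[of UNIV f] by auto

lemma open_left_transl:
  fixes Q :: "'a::topological_group_add set"
  assumes "open Q" shows "open ((+) a ` Q)"
  unfolding left_transl_eq
  by (rule open_vimage_cont[OF assms]) (intro continuous_intros)

lemma open_right_transl:
  fixes Q :: "'a::topological_group_add set"
  assumes "open Q" shows "open ((\<lambda>q. q + a) ` Q)"
  unfolding right_transl_eq
  by (rule open_vimage_cont[OF assms]) (intro continuous_intros)

lemma ess_sup_ge:
  fixes \<Psi> :: "'a::topological_space \<Rightarrow> 'b::real_normed_vector"
  assumes sM: "sets M = sets borel"
    and pos: "\<And>U. open U \<Longrightarrow> U \<noteq> {} \<Longrightarrow> emeasure M U > 0"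
    and cont: "continuous_on UNIV \<Psi>" and U: "open U" and p: "p \<in> U"
  shows "ennreal (norm (\<Psi> p)) \<le> ess_sup_on M U (\<lambda>y. ennreal (norm (\<Psi> y)))"
  unfolding ess_sup_on_def
proof (rule Inf_greatest, clarify)
  fix c assume AE: "AE y in M. y \<in> U \<longrightarrow> ennreal (norm (\<Psi> y)) \<le> c"
  show "ennreal (norm (\<Psi> p)) \<le> c"
  proof (rule ccontr)
    assume "\<not> ?thesis"
    then have lt: "c < ennreal (norm (\<Psi> p))" by simp
    then obtain r where r: "c = ennreal r" "r \<ge> 0"
      by (cases c rule: ennreal_cases) auto
    with lt have rl: "r < norm (\<Psi> p)" by (simp add: ennreal_less_iff)
    define V where "V = U \<inter> (\<lambda>y. norm (\<Psi> y)) -` {r<..}"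
    have "open V" unfolding V_def
      by (intro open_Int U open_vimage_cont) (auto intro!: continuous_intros cont)
    moreover have "p \<in> V" using p rl by (simp add: V_def)
    ultimately have Vpos: "emeasure M V > 0" using pos by blast
    from AE obtain N where N: "{y \<in> space M. \<not> (y \<in> U \<longrightarrow> ennreal (norm (\<Psi> y)) \<le> c)} \<subseteq> N"
      "emeasure M N = 0" "N \<in> sets M" by (rule AE_E)
    have sp: "space M = UNIV" using sets_eq_imp_space_eq[OF sM] by simp
    have "V \<subseteq> N"
    proof
      fix y assume "y \<in> V"
      then have "y \<in> U" "r < norm (\<Psi> y)" by (auto simp: V_def)
      then have "\<not> (y \<in> U \<longrightarrow> ennreal (norm (\<Psi> y)) \<le> c)"
        using r by (auto simp: ennreal_le_iff2 not_le)
      then show "y \<in> N" using N(1) sp by auto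
    qed
    then have "emeasure M V \<le> emeasure M N" using N(3) by (rule emeasure_mono)
    with N(2) Vpos show False by simp
  qed
qed

lemma ess_sup_const_le:
  "ess_sup_on M S (\<lambda>y. ennreal c) \<le> ennreal c"
  unfolding ess_sup_on_def by (rule Inf_lower) simp

lemma countable_index:
  fixes Q :: "'a::{topological_group_add,t2_space} set"
  assumes G: "sigma_compact_lc_group TYPE('a)" and Qo: "open Q" and Q0: "0 \<in> Q"
    and relsep: "rel_const Q I lam < \<infinity>"
  shows "countable I"
proof -
  obtain K :: "nat \<Rightarrow> 'a set" where K: "\<And>n. compact (K n)" "(\<Union>n. K n) = UNIV"
    using G unfolding sigma_compact_lc_group_def by blast
  have "\<exists>F. finite F \<and> K n \<subseteq> (\<Union>x\<in>F. (+) x ` Q)" for n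
  proof -
    have "K n \<subseteq> (\<Union>x\<in>K n. (+) x ` Q)"
    proof
      fix y assume "y \<in> K n"
      moreover have "y \<in> (+) y ` Q" using Q0 by (metis add.right_neutral image_eqI)
      ultimately show "y \<in> (\<Union>x\<in>K n. (+) x ` Q)" by blast
    qed
    then obtain C' where "C' \<subseteq> K n" "finite C'" "K n \<subseteq> (\<Union>x\<in>C'. (+) x ` Q)"
      using compactE_image[OF K(1)[of n], of "K n" "\<lambda>x. (+) x ` Q"] open_left_transl[OF Qo] by metis
    then show ?thesis by blast
  qed
  then obtain F where F: "\<And>n. finite (F n)" "\<And>n. K n \<subseteq> (\<Union>x\<in>F n. (+) x ` Q)" by metis
  define X where "X = (\<Union>n. F n)"
  have cX: "countable X" unfolding X_def using F(1) by (simp add: countable_finite)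
  have fin: "finite {i\<in>I. lam i \<in> (+) x ` Q}" for x
  proof -
    have "ecard {i\<in>I. lam i \<in> (+) x ` Q} \<le> rel_const Q I lam"
      unfolding rel_const_def by (rule SUP_upper) simp
    with relsep have "ecard {i\<in>I. lam i \<in> (+) x ` Q} \<noteq> \<infinity>" by auto
    then show ?thesis by (auto simp: ecard_def split: if_splits)
  qed
  have "I \<subseteq> (\<Union>x\<in>X. {i\<in>I. lam i \<in> (+) x ` Q})"
  proof
    fix i assume i: "i \<in> I"
    obtain n where "lam i \<in> K n" using K(2) by blast
    then obtain x where "x \<in> F n" "lam i \<in> (+) x ` Q" using F(2) by blast
    then show "i \<in> (\<Union>x\<in>X. {i\<in>I. lam i \<in> (+) x ` Q})" using i by (auto simp: X_def)
  qed
  moreover have "countable (\<Union>x\<in>X. {i\<in>I. lam i \<in> (+) x ` Q})"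
    using cX fin by (simp add: countable_finite)
  ultimately show ?thesis by (rule countable_subset)
qed

lemma haar_sets: "left_haar_measure M \<Longrightarrow> sets M = sets borel"
  by (simp add: left_haar_measure_def)

lemma transl_measurable:
  fixes M :: "'a::{topological_group_add,t2_space} measure"
  assumes "sets M = sets borel"
  shows "(\<lambda>x. a + x) \<in> measurable M M"
proof -
  have "(\<lambda>x. a + x) \<in> borel_measurable borel"
    by (intro borel_measurable_continuous_onI continuous_intros)
  then show ?thesis using measurable_cong_sets[OF assms assms] by blast
qed

lemma transl_nn_integral:
  fixes M :: "'a::{topological_group_add,t2_space} measure"
  assumes haar: "left_haar_measure M" and f: "f \<in> borel_measurable M"
  shows "(\<integral>\<^sup>+ x. f (a + x) \<partial>M) = (\<integral>\<^sup>+ x. f x \<partial>M)"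
proof -
  have sM: "sets M = sets borel" using haar by (rule haar_sets)
  have tm: "(\<lambda>x. a + x) \<in> measurable M M" by (rule transl_measurable[OF sM])
  have sp: "space M = UNIV" using sets_eq_imp_space_eq[OF sM] by simp
  have "distr M M (\<lambda>x. a + x) = M"
  proof (rule measure_eqI)
    fix A assume A: "A \<in> sets (distr M M (\<lambda>x. a + x))"
    then have A': "A \<in> sets M" by simp
    have "(\<lambda>x. a + x) -` A \<inter> space M = (+) (-a) ` A"
      using left_transl_eq[of "-a" A] sp by simp
    then have e1: "emeasure (distr M M (\<lambda>x. a + x)) A = emeasure M ((+) (-a) ` A)"
      using emeasure_distr[OF tm A'] by simp
    have inv: "\<forall>A\<in>sets M. \<forall>g. emeasure M ((+) g ` A) = emeasure M A"
      using haar by (simp add: left_haar_measure_def)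
    have "emeasure M ((+) (-a) ` A) = emeasure M A" using inv A' by blast
    then show "emeasure (distr M M (\<lambda>x. a + x)) A = emeasure M A" using e1 by simp
  qed simp
  then have e: "(\<integral>\<^sup>+ x. f x \<partial>M) = (\<integral>\<^sup>+ x. f x \<partial>(distr M M (\<lambda>x. a + x)))" by simp
  have f': "f \<in> borel_measurable (distr M M (\<lambda>x. a + x))"
    using f measurable_cong_sets[of "distr M M (\<lambda>x. a + x)" M borel borel] by simp
  have "(\<integral>\<^sup>+ x. f x \<partial>(distr M M (\<lambda>x. a + x))) = (\<integral>\<^sup>+ x. f (a + x) \<partial>M)" by (rule nn_integral_distr[OF tm f'])
  then show ?thesis using e by simp
qed



lemma ennreal_l2: "(0::ennreal) < R \<Longrightarrow> R < \<infinity> \<Longrightarrow> g / R \<le> f \<Longrightarrow> g \<le> R * f"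
proof -
  assume R: "0 < R" "R < \<infinity>" and le: "g / R \<le> f"
  have "g / R * R \<le> f * R" using le by (rule mult_right_mono) simp
  moreover have "g / R * R = g" using R by (simp add: ennreal_divide_times)
  ultimately show ?thesis by (simp add: mult.commute)
qed

lemma ennreal_l3: "(0::ennreal) < m \<Longrightarrow> m < \<infinity> \<Longrightarrow> s * m \<le> R * X \<Longrightarrow> s \<le> R / m * X"
proof -
  assume m: "0 < m" "m < \<infinity>" and le: "s * m \<le> R * X"
  have "s * m / m \<le> R * X / m" using le by (rule divide_right_mono_ennreal)
  moreover have "s * m / m = s" using m by (intro mult_divide_eq_ennreal) auto
  moreover have "R / m * X = R * X / m" by (simp add: ennreal_divide_times ennreal_times_divide)
  ultimately show ?thesis by simp
qed

lemma infsum_ennreal_multc: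
  fixes f :: "'i \<Rightarrow> ennreal"
  assumes "countable I"
  shows "(\<Sum>\<^sub>\<infinity>i\<in>I. f i * c) = (\<Sum>\<^sub>\<infinity>i\<in>I. f i) * c"
proof -
  obtain g and S :: "nat set" where g: "bij_betw g S I" using countable_bij_nat[OF assms] by blast
  have "(\<Sum>\<^sub>\<infinity>i\<in>I. f i * c) = (\<Sum>n. if n \<in> S then f (g n) * c else 0)"
    by (rule infsum_ennreal_suminf[OF g])
  also have "\<dots> = (\<Sum>n. (if n \<in> S then f (g n) else 0) * c)"
    by (intro suminf_cong) auto
  also have "\<dots> = (\<Sum>n. (if n \<in> S then f (g n) else 0)) * c"
    by (rule ennreal_suminf_multc)
  also have "\<dots> = (\<Sum>\<^sub>\<infinity>i\<in>I. f i) * c"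
    by (simp add: infsum_ennreal_suminf[OF g])
  finally show ?thesis .
qed

lemma infsum_ennreal_finite_support:
  fixes f :: "'i \<Rightarrow> ennreal"
  assumes "finite S" "S \<subseteq> I" "\<And>i. i \<in> I \<Longrightarrow> i \<notin> S \<Longrightarrow> f i = 0"
  shows "(\<Sum>\<^sub>\<infinity>i\<in>I. f i) = sum f S"
proof -
  have "(\<Sum>\<^sub>\<infinity>i\<in>I. f i) = (\<Sum>\<^sub>\<infinity>i\<in>S. f i)"
    by (rule infsum_cong_neutral) (use assms in auto)
  also have "\<dots> = sum f S" using assms(1) by simp
  finally show ?thesis .
qed

lemma core:
  fixes M :: "'a::{topological_group_add,t2_space} measure"
    and c :: "'i \<Rightarrow> ennreal" and a :: "'i \<Rightarrow> 'a" and F :: "'a \<Rightarrow> ennreal"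
  assumes haar: "left_haar_measure M" and Qo: "open Q" and cI: "countable I"
    and cnt: "\<And>z. ecard {i\<in>I. z \<in> (+) (a i) ` Q} \<le> R" and Rfin: "R < \<infinity>"
    and bound: "\<And>i z. i \<in> I \<Longrightarrow> z \<in> (+) (a i) ` Q \<Longrightarrow> c i \<le> F z"
  shows "(\<Sum>\<^sub>\<infinity>i\<in>I. c i) * emeasure M Q \<le> R * (\<integral>\<^sup>+ z. F z \<partial>M)"
proof -
  have sM: "sets M = sets borel" using haar by (rule haar_sets)
  define A where "A i = (+) (a i) ` Q" for i
  have Aopen: "open (A i)" for i unfolding A_def by (rule open_left_transl[OF Qo])
  have Asets: "A i \<in> sets M" for i using Aopen sM by simp
  have Qsets: "Q \<in> sets M" using Qo sM by simp
  have Ameas: "emeasure M (A i) = emeasure M Q" for i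
  proof -
    have inv: "\<forall>A\<in>sets M. \<forall>g. emeasure M ((+) g ` A) = emeasure M A"
      using haar by (simp add: left_haar_measure_def)
    then show ?thesis using Qsets unfolding A_def by blast
  qed
  define G where "G z = (\<Sum>\<^sub>\<infinity>i\<in>I. c i * indicator (A i) z)" for z
  have Gm: "G \<in> borel_measurable M"
    unfolding G_def by (rule measurable_infsum_ennreal[OF cI]) (use Asets in measurable)
  have "(\<Sum>\<^sub>\<infinity>i\<in>I. c i) * emeasure M Q = (\<Sum>\<^sub>\<infinity>i\<in>I. c i * emeasure M Q)"
    by (rule infsum_ennreal_multc[OF cI, symmetric])
  also have "\<dots> = (\<Sum>\<^sub>\<infinity>i\<in>I. \<integral>\<^sup>+ z. c i * indicator (A i) z \<partial>M)"
    by (intro infsum_cong) (simp add: nn_integral_cmult_indicator[OF Asets] Ameas)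
  also have "\<dots> = (\<integral>\<^sup>+ z. G z \<partial>M)"
    unfolding G_def by (rule nn_integral_infsum[OF cI, symmetric]) (use Asets in measurable)
  finally have eq: "(\<Sum>\<^sub>\<infinity>i\<in>I. c i) * emeasure M Q = (\<integral>\<^sup>+ z. G z \<partial>M)" .
  have Gle: "G z \<le> F z * R" for z
  proof -
    define S where "S = {i\<in>I. z \<in> A i}"
    have eS: "ecard S \<le> R" using cnt[of z] by (simp add: S_def A_def)
    then have finS: "finite S" using Rfin by (auto simp: ecard_def split: if_splits)
    have "G z = sum (\<lambda>i. c i * indicator (A i) z) S"
      unfolding G_def by (rule infsum_ennreal_finite_support) (use finS in \<open>auto simp: S_def\<close>)
    also have "\<dots> = sum c S" by (intro sum.cong) (auto simp: S_def)
    also have "\<dots> \<le> sum (\<lambda>_. F z) S"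
      by (intro sum_mono bound) (auto simp: S_def A_def)
    also have "\<dots> = of_nat (card S) * F z" by simp
    also have "\<dots> \<le> R * F z"
      using eS finS by (intro mult_right_mono) (auto simp: ecard_def)
    finally show ?thesis by (simp add: mult.commute)
  qed
  show ?thesis
  proof (cases "R = 0")
    case True
    then have G0: "G z = 0" for z using Gle[of z] by simp
    have "G = (\<lambda>_. 0)" using G0 by (intro ext) simp
    then show ?thesis unfolding eq by simp
  next
    case False
    then have R: "0 < R" "R < \<infinity>" using Rfin by (auto simp: zero_less_iff_neq_zero)
    have "(\<integral>\<^sup>+ z. G z \<partial>M) / R = (\<integral>\<^sup>+ z. G z / R \<partial>M)"
      by (rule nn_integral_divide[OF Gm, symmetric])
    also have "\<dots> \<le> (\<integral>\<^sup>+ z. F z \<partial>M)"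
    proof (intro nn_integral_mono)
      fix z have "G z \<le> R * F z" using Gle[of z] by (simp add: mult.commute)
      then show "G z / R \<le> F z" using R(1) by (rule divide_le_posI_ennreal[rotated])
    qed
    finally show ?thesis using eq ennreal_l2[OF R] by simp
  qed
qed



lemma ecard_mono: "A \<subseteq> B \<Longrightarrow> ecard A \<le> ecard B"
  by (auto simp: ecard_def intro: card_mono dest: finite_subset)

lemma ecard_le_rel: "ecard {i\<in>I. lam i \<in> (+) x ` Q} \<le> rel_const Q I lam"
  unfolding rel_const_def by (rule SUP_upper) simp

lemma cnt_bound:
  fixes Q :: "'a::group_add set"
  assumes Qsym: "uminus ` Q = Q"
  shows "ecard {i\<in>I. z \<in> (+) (-y + lam i) ` Q} \<le> rel_const Q I lam"
proof -
  have "{i\<in>I. z \<in> (+) (-y + lam i) ` Q} \<subseteq> {i\<in>I. lam i \<in> (+) (y + z) ` Q}"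
  proof
    fix i assume "i \<in> {i\<in>I. z \<in> (+) (-y + lam i) ` Q}"
    then obtain q where i: "i \<in> I" and q: "q \<in> Q" and z: "z = -y + lam i + q" by auto
    have "-q \<in> Q" using Qsym q by (metis image_eqI)
    moreover have "lam i = (y + z) + -q" using z by (simp add: add.assoc[symmetric])
    ultimately show "i \<in> {i\<in>I. lam i \<in> (+) (y + z) ` Q}" using i by (metis (mono_tags, lifting) image_eqI mem_Collect_eq)
  qed
  then show ?thesis by (rule order_trans[OF ecard_mono ecard_le_rel])
qed

lemma haar_pos:
  assumes "left_haar_measure M" "open U" "U \<noteq> {}" shows "emeasure M U > 0"
proof -
  have "\<forall>U. open U \<and> U \<noteq> {} \<longrightarrow> emeasure M U > 0"
    using assms(1) unfolding left_haar_measure_def by (elim conjE) assumption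
  then show ?thesis using assms(2,3) by blast
qed

lemma measQ:
  fixes M :: "'a::{topological_group_add,t2_space} measure"
  assumes haar: "left_haar_measure M" and Qo: "open Q" and Q0: "0 \<in> Q" and Qc: "compact (closure Q)"
  shows "0 < emeasure M Q" "emeasure M Q < \<infinity>"
proof -
  have sM: "sets M = sets borel" using haar by (rule haar_sets)
  have c: "\<forall>K. compact K \<longrightarrow> emeasure M K < \<infinity>"
    using haar unfolding left_haar_measure_def by (elim conjE) assumption
  show "0 < emeasure M Q" using haar_pos[OF haar Qo] Q0 by blast
  have "emeasure M (closure Q) < \<infinity>" using c Qc by blast
  moreover have "emeasure M Q \<le> emeasure M (closure Q)"
    by (rule emeasure_mono) (use sM in \<open>auto simp: closure_subset\<close>)
  ultimately show "emeasure M Q < \<infinity>" by simp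
qed

lemma part1:
  fixes M :: "'a::{topological_group_add,t2_space} measure"
    and \<Phi> \<Psi> :: "'a \<Rightarrow> real"
  assumes G: "sigma_compact_lc_group TYPE('a)"
    and haar: "left_haar_measure M"
    and Qo: "open Q" and Q0: "0 \<in> Q" and Qsym: "uminus ` Q = Q"
    and Qc: "compact (closure Q)"
    and relsep: "rel_const Q I lam < \<infinity>"
    and cP: "continuous_on UNIV \<Phi>" and cS: "continuous_on UNIV \<Psi>"
    and nP: "\<And>x. \<Phi> x \<ge> 0" and nS: "\<And>x. \<Psi> x \<ge> 0"
  shows "(\<Sum>\<^sub>\<infinity>i\<in>I. ennreal (\<Phi> (- lam i + x) * \<Psi> (- y + lam i)))
               \<le> rel_const Q I lam / emeasure M Q *
                 conv_nn M (maxL M Q \<Psi>) (maxR M Q \<Phi>) (- y + x)"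
proof -
  have sM: "sets M = sets borel" using haar by (rule haar_sets)
  have cI: "countable I" by (rule countable_index[OF G Qo Q0 relsep])
  have pos: "\<And>U. open U \<Longrightarrow> U \<noteq> {} \<Longrightarrow> emeasure M U > 0" using haar by (rule haar_pos)
  define F where "F z = maxL M Q \<Psi> z * maxR M Q \<Phi> (- z + (- y + x))" for z
  have "(\<Sum>\<^sub>\<infinity>i\<in>I. ennreal (\<Phi> (- lam i + x) * \<Psi> (- y + lam i))) * emeasure M Q
      \<le> rel_const Q I lam * (\<integral>\<^sup>+ z. F z \<partial>M)"
  proof (rule core[OF haar Qo cI, where a = "\<lambda>i. - y + lam i"])
    show "ecard {i \<in> I. z \<in> (+) (- y + lam i) ` Q} \<le> rel_const Q I lam" for z
      by (rule cnt_bound[OF Qsym])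
    show "rel_const Q I lam < \<infinity>" by (rule relsep)
    fix i z assume i: "i \<in> I" and z: "z \<in> (+) (- y + lam i) ` Q"
    then obtain q where q: "q \<in> Q" and zq: "z = - y + lam i + q" by auto
    have mq: "-q \<in> Q" using Qsym q by (metis image_eqI)
    have p1: "- y + lam i \<in> (+) z ` Q"
    proof -
      have "z + -q = - y + lam i" unfolding zq by (metis add.assoc add.right_inverse add.right_neutral)
      then have "- y + lam i = z + -q" by simp
      then show ?thesis using mq by (metis image_eqI)
    qed
    have p2: "- lam i + x \<in> (\<lambda>q. q + (- z + (- y + x))) ` Q"
    proof -
      have "- z = -q + (- lam i + y)" unfolding zq by (simp only: minus_add minus_minus add.assoc)
      then have "q + (- z + (- y + x)) = - lam i + x" by (simp only: add.assoc add_minus_cancel)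
      then show ?thesis using q by (metis image_eqI)
    qed
    have e1: "ennreal (\<Psi> (- y + lam i)) \<le> maxL M Q \<Psi> z"
      using ess_sup_ge[OF sM pos cS open_left_transl[OF Qo] p1] nS
      by (simp add: maxL_def)
    have e2: "ennreal (\<Phi> (- lam i + x)) \<le> maxR M Q \<Phi> (- z + (- y + x))"
      using ess_sup_ge[OF sM pos cP open_right_transl[OF Qo] p2] nP
      by (simp add: maxR_def)
    have "ennreal (\<Phi> (- lam i + x) * \<Psi> (- y + lam i)) = ennreal (\<Phi> (- lam i + x)) * ennreal (\<Psi> (- y + lam i))"
      using nP nS by (simp add: ennreal_mult)
    also have "\<dots> \<le> maxR M Q \<Phi> (- z + (- y + x)) * maxL M Q \<Psi> z"
      using e1 e2 by (intro mult_mono) auto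
    finally show "ennreal (\<Phi> (- lam i + x) * \<Psi> (- y + lam i)) \<le> F z"
      by (simp add: F_def mult.commute)
  qed
  then show ?thesis
    using ennreal_l3[OF measQ[OF haar Qo Q0 Qc]] by (simp add: conv_nn_def F_def)
qed



lemma ennreal_infsum_real:
  fixes f :: "'i \<Rightarrow> real"
  assumes fnn: "\<And>i. i \<in> A \<Longrightarrow> f i \<ge> 0" and summable: "f summable_on A"
  shows "ennreal (infsum f A) = (\<Sum>\<^sub>\<infinity>i\<in>A. ennreal (f i))"
proof -
  have \<section>: "\<And>F. \<lbrakk>finite F; F \<subseteq> A\<rbrakk> \<Longrightarrow> sum (ennreal \<circ> f) F = ennreal (sum f F)"
    by (metis (mono_tags, lifting) comp_def fnn subsetD sum.cong sum_ennreal)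
  then have "ennreal (infsum f A) = infsum (ennreal \<circ> f) A"
    by (simp add: infsum_comm_additive_general summable)
  then show ?thesis by (simp add: comp_def)
qed

lemma real_summable_of_ennreal:
  fixes f :: "'i \<Rightarrow> real"
  assumes fnn: "\<And>i. i \<in> I \<Longrightarrow> f i \<ge> 0" and fin: "(\<Sum>\<^sub>\<infinity>i\<in>I. ennreal (f i)) < \<infinity>"
  shows "f summable_on I"
proof (rule nonneg_bdd_above_summable_on[OF fnn])
  show "bdd_above (sum f ` {F. F \<subseteq> I \<and> finite F})"
  proof (rule bdd_aboveI)
    fix s assume "s \<in> sum f ` {F. F \<subseteq> I \<and> finite F}"
    then obtain F where F: "F \<subseteq> I" "finite F" "s = sum f F" by auto
    have "ennreal (sum f F) = (\<Sum>i\<in>F. ennreal (f i))"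
      using F fnn by (intro sum_ennreal[symmetric]) auto
    also have "\<dots> = (\<Sum>\<^sub>\<infinity>i\<in>F. ennreal (f i))" using F(2) by simp
    also have "\<dots> \<le> (\<Sum>\<^sub>\<infinity>i\<in>I. ennreal (f i))"
      using F(1) by (intro infsum_mono_neutral) (auto simp: nonneg_summable_on_complete)
    finally have le: "ennreal (sum f F) \<le> (\<Sum>\<^sub>\<infinity>i\<in>I. ennreal (f i))" .
    have "sum f F = enn2real (ennreal (sum f F))"
      using F fnn by (subst enn2real_ennreal) (auto intro!: sum_nonneg)
    also have "\<dots> \<le> enn2real (\<Sum>\<^sub>\<infinity>i\<in>I. ennreal (f i))"
      using le fin by (intro enn2real_mono) auto
    finally show "s \<le> enn2real (\<Sum>\<^sub>\<infinity>i\<in>I. ennreal (f i))" using F(3) by simp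
  qed
qed

lemma cont_meas:
  fixes f :: "'a::topological_space \<Rightarrow> 'b::topological_space"
  assumes "sets M = sets borel" "continuous_on UNIV f"
  shows "f \<in> borel_measurable M"
  by (subst measurable_cong_sets[OF assms(1) refl]) (rule borel_measurable_continuous_onI[OF assms(2)])

lemma infsum_CS:
  fixes a b :: "'i \<Rightarrow> real"
  assumes an: "\<And>i. a i \<ge> 0" and bn: "\<And>i. b i \<ge> 0"
    and s1: "(\<lambda>i. a i * b i) summable_on I"
    and s2: "(\<lambda>i. (a i)\<^sup>2 * b i) summable_on I"
    and s3: "b summable_on I"
  shows "(\<Sum>\<^sub>\<infinity>i\<in>I. a i * b i)\<^sup>2 \<le> (\<Sum>\<^sub>\<infinity>i\<in>I. (a i)\<^sup>2 * b i) * (\<Sum>\<^sub>\<infinity>i\<in>I. b i)"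
proof -
  let ?A = "\<Sum>\<^sub>\<infinity>i\<in>I. (a i)\<^sup>2 * b i" and ?B = "\<Sum>\<^sub>\<infinity>i\<in>I. b i"
  have A0: "?A \<ge> 0" and B0: "?B \<ge> 0" using an bn by (auto intro!: infsum_nonneg)
  have "(\<Sum>\<^sub>\<infinity>i\<in>I. a i * b i) \<le> sqrt (?A * ?B)"
  proof (rule infsum_le_finite_sums[OF s1])
    fix F assume F: "finite F" "F \<subseteq> I"
    have "(\<Sum>i\<in>F. a i * b i) = (\<Sum>i\<in>F. (a i * sqrt (b i)) * sqrt (b i))"
      using bn by (intro sum.cong) (auto simp: mult.assoc real_sqrt_mult_self)
    then have "(\<Sum>i\<in>F. a i * b i)\<^sup>2 \<le> (\<Sum>i\<in>F. (a i * sqrt (b i))\<^sup>2) * (\<Sum>i\<in>F. (sqrt (b i))\<^sup>2)"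
      using Cauchy_Schwarz_ineq_sum[of "\<lambda>i. a i * sqrt (b i)" "\<lambda>i. sqrt (b i)" F] by simp
    also have "\<dots> = (\<Sum>i\<in>F. (a i)\<^sup>2 * b i) * (\<Sum>i\<in>F. b i)"
      using bn by (simp add: power_mult_distrib)
    also have "\<dots> \<le> ?A * ?B"
    proof (rule mult_mono)
      show "(\<Sum>i\<in>F. (a i)\<^sup>2 * b i) \<le> ?A"
        using F bn by (intro finite_sum_le_infsum[OF s2]) auto
      show "(\<Sum>i\<in>F. b i) \<le> ?B"
        using F bn by (intro finite_sum_le_infsum[OF s3]) auto
    qed (use A0 B0 bn in \<open>auto intro!: sum_nonneg\<close>)
    finally have "(\<Sum>i\<in>F. a i * b i)\<^sup>2 \<le> ?A * ?B" .
    then show "(\<Sum>i\<in>F. a i * b i) \<le> sqrt (?A * ?B)"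
      by (metis real_le_rsqrt)
  qed
  moreover have "(\<Sum>\<^sub>\<infinity>i\<in>I. a i * b i) \<ge> 0" using an bn by (auto intro!: infsum_nonneg)
  ultimately have "(\<Sum>\<^sub>\<infinity>i\<in>I. a i * b i)\<^sup>2 \<le> (sqrt (?A * ?B))\<^sup>2"
    by (intro power_mono) auto
  also have "\<dots> = ?A * ?B" using A0 B0 by simp
  finally show ?thesis .
qed



lemma cont_shift:
  fixes \<Theta> :: "'a::topological_group_add \<Rightarrow> 'b::topological_space"
  assumes "continuous_on UNIV \<Theta>" shows "continuous_on UNIV (\<lambda>x. \<Theta> (a + x))"
  by (rule continuous_on_compose2[OF assms]) (auto intro!: continuous_intros)

lemma cont_neg:
  fixes \<Theta> :: "'a::topological_group_add \<Rightarrow> 'b::topological_space"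
  assumes "continuous_on UNIV \<Theta>" shows "continuous_on UNIV (\<lambda>x. \<Theta> (- x))"
  by (rule continuous_on_compose2[OF assms]) (auto intro!: continuous_intros)

lemma part2:
  fixes M :: "'a::{topological_group_add,t2_space} measure"
    and \<Psi> :: "'a \<Rightarrow> real"
  assumes G: "sigma_compact_lc_group TYPE('a)"
    and haar: "left_haar_measure M"
    and Qo: "open Q" and Q0: "0 \<in> Q" and Qsym: "uminus ` Q = Q"
    and Qc: "compact (closure Q)"
    and relsep: "rel_const Q I lam < \<infinity>"
    and cS: "continuous_on UNIV \<Psi>" and nS: "\<And>x. \<Psi> x \<ge> 0"
  shows "(\<Sum>\<^sub>\<infinity>i\<in>I. ennreal (\<Psi> (- y + lam i)))
               \<le> rel_const Q I lam / emeasure M Q * wiener_norm M Q \<Psi>"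
proof -
  have "(\<Sum>\<^sub>\<infinity>i\<in>I. ennreal ((\<lambda>_. 1::real) (- lam i + y) * \<Psi> (- y + lam i)))
               \<le> rel_const Q I lam / emeasure M Q *
                 conv_nn M (maxL M Q \<Psi>) (maxR M Q (\<lambda>_. 1::real)) (- y + y)"
    by (rule part1[OF G haar Qo Q0 Qsym Qc relsep _ cS _ nS]) auto
  moreover have "conv_nn M (maxL M Q \<Psi>) (maxR M Q (\<lambda>_. 1::real)) (- y + y) \<le> wiener_norm M Q \<Psi>"
    unfolding conv_nn_def wiener_norm_def
  proof (intro nn_integral_mono)
    fix z
    have "maxR M Q (\<lambda>_. 1::real) (- z + (- y + y)) \<le> 1"
      unfolding maxR_def using ess_sup_const_le[of M _ 1] by simp
    then show "maxL M Q \<Psi> z * maxR M Q (\<lambda>_. 1::real) (- z + (- y + y)) \<le> maxL M Q \<Psi> z"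
      using mult_left_mono[of "maxR M Q (\<lambda>_. 1::real) (- z + (- y + y))" 1 "maxL M Q \<Psi> z"] by simp
  qed
  ultimately show ?thesis
    by (simp del: add.left_inverse) (meson mult_left_mono order_trans zero_le)
qed



lemma part3:
  fixes M :: "'a::{topological_group_add,t2_space} measure"
    and \<Theta> :: "'a \<Rightarrow> complex" and c :: "'i \<Rightarrow> complex"
  assumes G: "sigma_compact_lc_group TYPE('a)"
    and haar: "left_haar_measure M"
    and Qo: "open Q" and Q0: "0 \<in> Q" and Qsym: "uminus ` Q = Q"
    and Qc: "compact (closure Q)"
    and relsep: "rel_const Q I lam < \<infinity>"
    and cT: "continuous_on UNIV \<Theta>" and W: "in_wiener M Q (\<lambda>x. \<Theta> (- x))"
    and cs: "(\<lambda>i. (norm (c i))\<^sup>2) summable_on I"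
  shows "(AE x in M. (\<lambda>i. norm (c i * \<Theta> (- lam i + x))) summable_on I) \<and>
           (\<lambda>x. \<Sum>\<^sub>\<infinity>i\<in>I. c i * \<Theta> (- lam i + x)) \<in> borel_measurable M \<and>
           (\<integral>\<^sup>+ x. ennreal ((norm (\<Sum>\<^sub>\<infinity>i\<in>I. c i * \<Theta> (- lam i + x)))\<^sup>2) \<partial>M)
             \<le> rel_const Q I lam / emeasure M Q * (\<integral>\<^sup>+ x. ennreal (norm (\<Theta> x)) \<partial>M)
               * wiener_norm M Q (\<lambda>x. \<Theta> (- x)) * ennreal (\<Sum>\<^sub>\<infinity>i\<in>I. (norm (c i))\<^sup>2)"
proof -
  have sM: "sets M = sets borel" using haar by (rule haar_sets)
  have cI: "countable I" by (rule countable_index[OF G Qo Q0 relsep])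
  define b where "b i x = norm (\<Theta> (- lam i + x))" for i x
  define K where "K = rel_const Q I lam / emeasure M Q * wiener_norm M Q (\<lambda>x. \<Theta> (- x))"
  define Nc where "Nc = (\<Sum>\<^sub>\<infinity>i\<in>I. (norm (c i))\<^sup>2)"
  have mQ: "0 < emeasure M Q" "emeasure M Q < \<infinity>" using measQ[OF haar Qo Q0 Qc] by auto
  have Wfin: "wiener_norm M Q (\<lambda>x. \<Theta> (- x)) < \<infinity>" using W by (simp add: in_wiener_def)
  have Kfin: "K < \<infinity>"
  proof -
    have "rel_const Q I lam / emeasure M Q \<noteq> \<infinity>"
      using relsep mQ by (auto simp: ennreal_divide_eq_top_iff)
    then show ?thesis using Wfin unfolding K_def
      by (simp add: ennreal_mult_less_top less_top)
  qed
  have bn: "b i x \<ge> 0" for i x by (simp add: b_def)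
  have Bx: "(\<Sum>\<^sub>\<infinity>i\<in>I. ennreal (b i x)) \<le> K" for x
  proof -
    have cN: "continuous_on UNIV (\<lambda>u. norm (\<Theta> (- u)))"
      by (intro continuous_on_norm cont_neg cT)
    have "(\<Sum>\<^sub>\<infinity>i\<in>I. ennreal ((\<lambda>u. norm (\<Theta> (- u))) (- x + lam i)))
        \<le> rel_const Q I lam / emeasure M Q * wiener_norm M Q (\<lambda>u. norm (\<Theta> (- u)))"
      by (rule part2[OF G haar Qo Q0 Qsym Qc relsep cN]) simp
    moreover have "(\<lambda>u. norm (\<Theta> (- u))) (- x + lam i) = b i x" for i
      unfolding b_def by (simp only: minus_add minus_minus)
    moreover have "wiener_norm M Q (\<lambda>u. norm (\<Theta> (- u))) = wiener_norm M Q (\<lambda>x. \<Theta> (- x))"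
      by (simp add: wiener_norm_def maxL_def)
    ultimately show ?thesis by (simp add: K_def)
  qed
  have bs: "(\<lambda>i. b i x) summable_on I" for x
    using Bx[of x] Kfin bn by (intro real_summable_of_ennreal) auto
  have Bxr: "ennreal (\<Sum>\<^sub>\<infinity>i\<in>I. b i x) \<le> K" for x
    using Bx[of x] ennreal_infsum_real[OF _ bs[of x]] bn by simp
  have cb: "(norm (c i))\<^sup>2 \<le> Nc" if "i \<in> I" for i
  proof -
    have "sum (\<lambda>i. (norm (c i))\<^sup>2) {i} \<le> Nc"
      unfolding Nc_def using that by (intro finite_sum_le_infsum[OF cs]) auto
    then show ?thesis by simp
  qed
  have cb': "norm (c i) \<le> sqrt Nc" if "i \<in> I" for i
    using cb[OF that] by (simp add: real_le_rsqrt)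
  have s1: "(\<lambda>i. norm (c i) * b i x) summable_on I" for x
  proof (rule summable_on_comparison_test)
    show "(\<lambda>i. sqrt Nc * b i x) summable_on I" by (rule summable_on_cmult_right[OF bs])
    show "norm (c i) * b i x \<le> sqrt Nc * b i x" if "i \<in> I" for i
      using cb'[OF that] bn by (intro mult_right_mono) auto
    show "0 \<le> norm (c i) * b i x" for i using bn by simp
  qed
  have s2: "(\<lambda>i. (norm (c i))\<^sup>2 * b i x) summable_on I" for x
  proof (rule summable_on_comparison_test)
    show "(\<lambda>i. Nc * b i x) summable_on I" by (rule summable_on_cmult_right[OF bs])
    show "(norm (c i))\<^sup>2 * b i x \<le> Nc * b i x" if "i \<in> I" for i
      using cb[OF that] bn by (intro mult_right_mono) auto
    show "0 \<le> (norm (c i))\<^sup>2 * b i x" for i using bn by simp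
  qed
  have nm: "norm (c i * \<Theta> (- lam i + x)) = norm (c i) * b i x" for i x
    by (simp add: b_def norm_mult)
  have sn: "(\<lambda>i. norm (c i * \<Theta> (- lam i + x))) summable_on I" for x
    unfolding nm by (rule s1)
  have sc: "(\<lambda>i. c i * \<Theta> (- lam i + x)) summable_on I" for x
    by (rule abs_summable_summable[OF sn])
  have cterm: "continuous_on UNIV (\<lambda>x. \<Theta> (- lam i + x))" for i
    by (rule cont_shift[OF cT])
  have meas: "(\<lambda>x. \<Sum>\<^sub>\<infinity>i\<in>I. c i * \<Theta> (- lam i + x)) \<in> borel_measurable M"
  proof (rule measurable_infsum_banach[OF cI _ sc])
    fix i show "(\<lambda>x. c i * \<Theta> (- lam i + x)) \<in> borel_measurable M"
      by (rule cont_meas[OF sM]) (intro continuous_intros cterm)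
  qed
  have bm: "(\<lambda>x. ennreal (b i x)) \<in> borel_measurable M" for i
  proof -
    have "(\<lambda>x. b i x) \<in> borel_measurable M"
      unfolding b_def by (rule cont_meas[OF sM]) (intro continuous_intros cterm)
    then show ?thesis by measurable
  qed
  define A where "A x = (\<Sum>\<^sub>\<infinity>i\<in>I. ennreal ((norm (c i))\<^sup>2) * ennreal (b i x))" for x
  have Am: "A \<in> borel_measurable M"
    unfolding A_def by (rule measurable_infsum_ennreal[OF cI]) (use bm in measurable)
  have pw: "ennreal ((norm (\<Sum>\<^sub>\<infinity>i\<in>I. c i * \<Theta> (- lam i + x)))\<^sup>2) \<le> A x * K" for x
  proof -
    have "norm (\<Sum>\<^sub>\<infinity>i\<in>I. c i * \<Theta> (- lam i + x)) \<le> (\<Sum>\<^sub>\<infinity>i\<in>I. norm (c i) * b i x)"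
      by (rule norm_infsum_le[OF has_sum_infsum[OF sc] has_sum_infsum[OF s1]]) (simp add: nm)
    then have "(norm (\<Sum>\<^sub>\<infinity>i\<in>I. c i * \<Theta> (- lam i + x)))\<^sup>2 \<le> (\<Sum>\<^sub>\<infinity>i\<in>I. norm (c i) * b i x)\<^sup>2"
      by (intro power_mono) auto
    also have "\<dots> \<le> (\<Sum>\<^sub>\<infinity>i\<in>I. (norm (c i))\<^sup>2 * b i x) * (\<Sum>\<^sub>\<infinity>i\<in>I. b i x)"
      by (rule infsum_CS[OF _ bn s1 s2 bs]) simp
    finally have r: "(norm (\<Sum>\<^sub>\<infinity>i\<in>I. c i * \<Theta> (- lam i + x)))\<^sup>2 \<le> (\<Sum>\<^sub>\<infinity>i\<in>I. (norm (c i))\<^sup>2 * b i x) * (\<Sum>\<^sub>\<infinity>i\<in>I. b i x)" .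
    have A0: "(\<Sum>\<^sub>\<infinity>i\<in>I. (norm (c i))\<^sup>2 * b i x) \<ge> 0" and B0: "(\<Sum>\<^sub>\<infinity>i\<in>I. b i x) \<ge> 0"
      using bn by (auto intro!: infsum_nonneg)
    have eA: "ennreal (\<Sum>\<^sub>\<infinity>i\<in>I. (norm (c i))\<^sup>2 * b i x) = A x"
      unfolding A_def using bn by (subst ennreal_infsum_real[OF _ s2]) (auto simp: ennreal_mult)
    have "ennreal ((norm (\<Sum>\<^sub>\<infinity>i\<in>I. c i * \<Theta> (- lam i + x)))\<^sup>2)
        \<le> ennreal ((\<Sum>\<^sub>\<infinity>i\<in>I. (norm (c i))\<^sup>2 * b i x) * (\<Sum>\<^sub>\<infinity>i\<in>I. b i x))"
      using r by (rule ennreal_leI)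
    also have "\<dots> = A x * ennreal (\<Sum>\<^sub>\<infinity>i\<in>I. b i x)"
      using A0 B0 eA by (simp add: ennreal_mult)
    also have "\<dots> \<le> A x * K" using Bxr[of x] by (intro mult_left_mono) auto
    finally show ?thesis .
  qed
  have T: "(\<integral>\<^sup>+ x. ennreal (b i x) \<partial>M) = (\<integral>\<^sup>+ x. ennreal (norm (\<Theta> x)) \<partial>M)" for i
  proof -
    have "(\<lambda>x. ennreal (norm (\<Theta> x))) \<in> borel_measurable M"
    proof -
      have "(\<lambda>x. norm (\<Theta> x)) \<in> borel_measurable M"
        by (rule cont_meas[OF sM]) (intro continuous_intros cT)
      then show ?thesis by measurable
    qed
    then show ?thesis unfolding b_def by (rule transl_nn_integral[OF haar])
  qed
  have "(\<integral>\<^sup>+ x. ennreal ((norm (\<Sum>\<^sub>\<infinity>i\<in>I. c i * \<Theta> (- lam i + x)))\<^sup>2) \<partial>M)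
      \<le> (\<integral>\<^sup>+ x. A x * K \<partial>M)"
    by (intro nn_integral_mono pw)
  also have "\<dots> = (\<integral>\<^sup>+ x. A x \<partial>M) * K" by (rule nn_integral_multc[OF Am])
  also have "(\<integral>\<^sup>+ x. A x \<partial>M) = (\<Sum>\<^sub>\<infinity>i\<in>I. \<integral>\<^sup>+ x. ennreal ((norm (c i))\<^sup>2) * ennreal (b i x) \<partial>M)"
    unfolding A_def by (rule nn_integral_infsum[OF cI]) (use bm in measurable)
  also have "\<dots> = (\<Sum>\<^sub>\<infinity>i\<in>I. ennreal ((norm (c i))\<^sup>2) * (\<integral>\<^sup>+ x. ennreal (norm (\<Theta> x)) \<partial>M))"
    by (intro infsum_cong) (simp add: nn_integral_cmult[OF bm] T)
  also have "\<dots> = (\<Sum>\<^sub>\<infinity>i\<in>I. ennreal ((norm (c i))\<^sup>2)) * (\<integral>\<^sup>+ x. ennreal (norm (\<Theta> x)) \<partial>M)"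
    by (rule infsum_ennreal_multc[OF cI])
  also have "(\<Sum>\<^sub>\<infinity>i\<in>I. ennreal ((norm (c i))\<^sup>2)) = ennreal Nc"
    unfolding Nc_def by (rule ennreal_infsum_real[OF _ cs, symmetric]) simp
  finally have bound: "(\<integral>\<^sup>+ x. ennreal ((norm (\<Sum>\<^sub>\<infinity>i\<in>I. c i * \<Theta> (- lam i + x)))\<^sup>2) \<partial>M)
      \<le> ennreal Nc * (\<integral>\<^sup>+ x. ennreal (norm (\<Theta> x)) \<partial>M) * K" .
  have AE: "AE x in M. (\<lambda>i. norm (c i * \<Theta> (- lam i + x))) summable_on I"
    using sn by simp
  show ?thesis using AE meas bound by (simp add: K_def Nc_def mult.commute mult.left_commute)
qed


theorem lemma2p4:
  fixes M :: "'a::{topological_group_add,t2_space} measure"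
    and Q :: "'a set"
    and I :: "'i set" and lam :: "'i \<Rightarrow> 'a"
  assumes G: "sigma_compact_lc_group TYPE('a)"
    and haar: "left_haar_measure M"
    and Q_open: "open Q" and Q_e: "0 \<in> Q" and Q_sym: "uminus ` Q = Q"
    and Q_rc: "compact (closure Q)"
    and relsep: "rel_const Q I lam < \<infinity>"
  shows
    "(\<forall>(\<Phi>::'a \<Rightarrow> real) (\<Psi>::'a \<Rightarrow> real).
        continuous_on UNIV \<Phi> \<and> continuous_on UNIV \<Psi> \<and> (\<forall>x. \<Phi> x \<ge> 0) \<and> (\<forall>x. \<Psi> x \<ge> 0) \<longrightarrow>
        (\<forall>x y. (\<Sum>\<^sub>\<infinity>i\<in>I. ennreal (\<Phi> (- lam i + x) * \<Psi> (- y + lam i)))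
               \<le> rel_const Q I lam / emeasure M Q *
                 conv_nn M (maxL M Q \<Psi>) (maxR M Q \<Phi>) (- y + x)) \<and>
        (\<forall>y. (\<Sum>\<^sub>\<infinity>i\<in>I. ennreal (\<Psi> (- y + lam i)))
               \<le> rel_const Q I lam / emeasure M Q * wiener_norm M Q \<Psi>))
     \<and>
     (\<forall>\<Theta>::'a \<Rightarrow> complex.
        integrable M \<Theta> \<and> continuous_on UNIV \<Theta> \<and> in_wiener M Q (\<lambda>x. \<Theta> (- x)) \<longrightarrow>
        (\<forall>c::'i \<Rightarrow> complex. (\<lambda>i. (norm (c i))\<^sup>2) summable_on I \<longrightarrow>
           (AE x in M. (\<lambda>i. norm (c i * \<Theta> (- lam i + x))) summable_on I) \<and>
           (\<lambda>x. \<Sum>\<^sub>\<infinity>i\<in>I. c i * \<Theta> (- lam i + x)) \<in> borel_measurable M \<and>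
           (\<integral>\<^sup>+ x. ennreal ((norm (\<Sum>\<^sub>\<infinity>i\<in>I. c i * \<Theta> (- lam i + x)))\<^sup>2) \<partial>M)
             \<le> rel_const Q I lam / emeasure M Q * (\<integral>\<^sup>+ x. ennreal (norm (\<Theta> x)) \<partial>M)
               * wiener_norm M Q (\<lambda>x. \<Theta> (- x)) * ennreal (\<Sum>\<^sub>\<infinity>i\<in>I. (norm (c i))\<^sup>2)))"
proof (intro conjI allI impI)
  fix \<Phi> \<Psi> :: "'a \<Rightarrow> real" and x y
  assume h: "continuous_on UNIV \<Phi> \<and> continuous_on UNIV \<Psi> \<and> (\<forall>x. \<Phi> x \<ge> 0) \<and> (\<forall>x. \<Psi> x \<ge> 0)"
  then show "(\<Sum>\<^sub>\<infinity>i\<in>I. ennreal (\<Phi> (- lam i + x) * \<Psi> (- y + lam i)))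
               \<le> rel_const Q I lam / emeasure M Q *
                 conv_nn M (maxL M Q \<Psi>) (maxR M Q \<Phi>) (- y + x)"
    by (intro part1[OF G haar Q_open Q_e Q_sym Q_rc relsep]) auto
next
  fix \<Phi> \<Psi> :: "'a \<Rightarrow> real" and y
  assume h: "continuous_on UNIV \<Phi> \<and> continuous_on UNIV \<Psi> \<and> (\<forall>x. \<Phi> x \<ge> 0) \<and> (\<forall>x. \<Psi> x \<ge> 0)"
  then show "(\<Sum>\<^sub>\<infinity>i\<in>I. ennreal (\<Psi> (- y + lam i)))
               \<le> rel_const Q I lam / emeasure M Q * wiener_norm M Q \<Psi>"
    by (intro part2[OF G haar Q_open Q_e Q_sym Q_rc relsep]) auto
next
  fix \<Theta> :: "'a \<Rightarrow> complex" and c :: "'i \<Rightarrow> complex"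
  assume h: "integrable M \<Theta> \<and> continuous_on UNIV \<Theta> \<and> in_wiener M Q (\<lambda>x. \<Theta> (- x))"
    and cs: "(\<lambda>i. (norm (c i))\<^sup>2) summable_on I"
  have p: "(AE x in M. (\<lambda>i. norm (c i * \<Theta> (- lam i + x))) summable_on I) \<and>
           (\<lambda>x. \<Sum>\<^sub>\<infinity>i\<in>I. c i * \<Theta> (- lam i + x)) \<in> borel_measurable M \<and>
           (\<integral>\<^sup>+ x. ennreal ((norm (\<Sum>\<^sub>\<infinity>i\<in>I. c i * \<Theta> (- lam i + x)))\<^sup>2) \<partial>M)
             \<le> rel_const Q I lam / emeasure M Q * (\<integral>\<^sup>+ x. ennreal (norm (\<Theta> x)) \<partial>M)
               * wiener_norm M Q (\<lambda>x. \<Theta> (- x)) * ennreal (\<Sum>\<^sub>\<infinity>i\<in>I. (norm (c i))\<^sup>2)"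
    using h by (intro part3[OF G haar Q_open Q_e Q_sym Q_rc relsep _ _ cs]) auto
  then show "AE x in M. (\<lambda>i. norm (c i * \<Theta> (- lam i + x))) summable_on I" by blast
  from p show "(\<lambda>x. \<Sum>\<^sub>\<infinity>i\<in>I. c i * \<Theta> (- lam i + x)) \<in> borel_measurable M" by blast
  from p show "(\<integral>\<^sup>+ x. ennreal ((norm (\<Sum>\<^sub>\<infinity>i\<in>I. c i * \<Theta> (- lam i + x)))\<^sup>2) \<partial>M)
             \<le> rel_const Q I lam / emeasure M Q * (\<integral>\<^sup>+ x. ennreal (norm (\<Theta> x)) \<partial>M)
               * wiener_norm M Q (\<lambda>x. \<Theta> (- x)) * ennreal (\<Sum>\<^sub>\<infinity>i\<in>I. (norm (c i))\<^sup>2)" by blast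
qed

end
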